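(* Let $f\in\mathrm{Dom}_+(\Gamma)$ be a strictly positive bounded function and $b=\sup_{x\in\mathbb X}f(x)$. Assume there exists an increasing (not necessarily strictly) function $g:(0,\infty)\to(0,\infty)$ with $\int_0^b\frac{dy}{g(y)}<\infty$. If $\Gamma f(x)\le-g(f(x))$ for all $x\in\mathbb X$, then $\mathbb E_x\zeta<\infty$ for all $x\in\mathbb X$.
   Context: Let $\mathbb X$ be a countably infinite set and $\Gamma=(\Gamma_{xy})_{x,y\in\mathbb X}$ a matrix with $\Gamma_{xy}\ge0$ for $y\ne x$, $\gamma_x:=\sum_{y\ne x}\Gamma_{xy}$, $\Gamma_{xx}=-\gamma_x$, and $0<\gamma_x<\infty$ for all $x$. Let $P_{xy}=\Gamma_{xy}/\gamma_x$ for $y\neq x$ and $P_{xx}=0$; the discrete-time chain $(\tilde\xi_n)$ with transition matrix $P$ (embedded jump chain) is assumed irreducible. The continuous-time Markov chain $(\xi_t)_{t\ge0}$ with generator $\Gamma$: conditionally on $\tilde\xi$, holding times $\sigma_n$ ($n\ge1$) are independent exponential with parameter $\gamma_{\tilde\xi_{n-1}}$; $J_0=0$, $J_n=\sigma_1+\dots+\sigma_n$; explosion time $\zeta=\lim_n J_n$; $\xi_t=\tilde\xi_n$ on $[J_n,J_{n+1})$ and $\xi_t=\partial$ (cemetery) for $t\ge\zeta$. $\mathbb E_x$ refers to $\xi_0=x$. $\mathrm{Dom}(\Gamma)=\{f:\mathbb X\to\mathbb R:\ \sum_{y\ne x}\Gamma_{xy}|f(y)|<\infty\ \forall x\}$,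 $\mathrm{Dom}_+(\Gamma)$ its non-negative elements, $\Gamma f(x)=\sum_{y}\Gamma_{xy}f(y)$. *)

theory Defs
  imports "HOL-Probability.Probability"
begin

definition rate :: "('x \<Rightarrow> 'x \<Rightarrow> real) \<Rightarrow> 'x \<Rightarrow> real" where
  "rate \<Gamma> x = (\<Sum>\<^sub>\<infinity> y \<in> UNIV - {x}. \<Gamma> x y)"

definition qmatrix :: "('x \<Rightarrow> 'x \<Rightarrow> real) \<Rightarrow> bool" where
  "qmatrix \<Gamma> \<longleftrightarrow>
     (\<forall>x y. y \<noteq> x \<longrightarrow> \<Gamma> x y \<ge> 0) \<and>
     (\<forall>x. (\<Gamma> x) summable_on (UNIV - {x})) \<and>
     (\<forall>x. \<Gamma> x x = - rate \<Gamma> x) \<and>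
     (\<forall>x. 0 < rate \<Gamma> x)"

definition jumpP :: "('x \<Rightarrow> 'x \<Rightarrow> real) \<Rightarrow> 'x \<Rightarrow> 'x \<Rightarrow> real" where
  "jumpP \<Gamma> x y = (if y = x then 0 else \<Gamma> x y / rate \<Gamma> x)"

definition jump_irreducible :: "('x \<Rightarrow> 'x \<Rightarrow> real) \<Rightarrow> bool" where
  "jump_irreducible \<Gamma> \<longleftrightarrow>
     (\<forall>x y. \<exists>xs. xs \<noteq> [] \<and> hd xs = x \<and> last xs = y \<and>
        (\<forall>i. Suc i < length xs \<longrightarrow> jumpP \<Gamma> (xs ! i) (xs ! Suc i) > 0))"

definition in_Dom :: "('x \<Rightarrow> 'x \<Rightarrow> real) \<Rightarrow> ('x \<Rightarrow> real) \<Rightarrow> bool" where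
  "in_Dom \<Gamma> f \<longleftrightarrow> (\<forall>x. (\<lambda>y. \<Gamma> x y * \<bar>f y\<bar>) summable_on (UNIV - {x}))"

definition gen_apply :: "('x \<Rightarrow> 'x \<Rightarrow> real) \<Rightarrow> ('x \<Rightarrow> real) \<Rightarrow> 'x \<Rightarrow> real" where
  "gen_apply \<Gamma> f x = (\<Sum>\<^sub>\<infinity> y. \<Gamma> x y * f y)"

text \<open>A realisation of the continuous-time chain started at x0 on a probability
  space M: X n is the jump chain (tilde xi_n), and sig (Suc n) is the holding time
  sigma_(n+1) (sig 0 is unused).  The joint law is specified by its finite-dimensional
  distributions: X_0 = x0, jump chain with matrix jumpP, and conditionally on the jump
  chain the holding times are independent exponentials with parameter
  rate(X_(n)).\<close>
definition ctmc_model ::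
  "('x \<Rightarrow> 'x \<Rightarrow> real) \<Rightarrow> 'x \<Rightarrow> 'a measure \<Rightarrow> (nat \<Rightarrow> 'a \<Rightarrow> 'x) \<Rightarrow> (nat \<Rightarrow> 'a \<Rightarrow> real) \<Rightarrow> bool" where
  "ctmc_model \<Gamma> x0 M X sig \<longleftrightarrow>
     prob_space M \<and>
     (\<forall>n. X n \<in> measurable M (count_space UNIV)) \<and>
     (\<forall>n. sig n \<in> borel_measurable M) \<and>
     (\<forall>n xs ts. length xs = Suc n \<and> length ts = n \<and> (\<forall>t\<in>set ts. t \<ge> 0) \<longrightarrow>
        measure M {\<omega> \<in> space M. (\<forall>i\<le>n. X i \<omega> = xs ! i) \<and> (\<forall>i<n. sig (Suc i) \<omega> > ts ! i)}
        = (if xs ! 0 = x0 then 1 else 0) *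
          (\<Prod>i<n. jumpP \<Gamma> (xs ! i) (xs ! Suc i) * exp (- rate \<Gamma> (xs ! i) * ts ! i)))"

definition explosion_time :: "(nat \<Rightarrow> 'a \<Rightarrow> real) \<Rightarrow> 'a \<Rightarrow> ennreal" where
  "explosion_time sig \<omega> = (\<Sum>n. ennreal (sig (Suc n) \<omega>))"

end

theory Submission
  imports Defs
begin


lemma nn_conv:
  fixes f :: "'a \<Rightarrow> real"
  assumes "f summable_on A" "\<And>x. x \<in> A \<Longrightarrow> f x \<ge> 0"
  shows "(\<integral>\<^sup>+x. ennreal (f x) \<partial>count_space A) = ennreal (infsum f A)"
proof -
  have "Infinite_Sum.abs_summable_on f A"
    using assms summable_on_iff_abs_summable_on_real by blast
  hence a: "Infinite_Set_Sum.abs_summable_on f A" using abs_summable_equivalent by blast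
  show ?thesis using nn_integral_conv_infsetsum[OF a] infsetsum_infsum[OF a] assms(2) by simp
qed

lemma jumpP_nonneg: "qmatrix \<Gamma> \<Longrightarrow> jumpP \<Gamma> x z \<ge> 0"
  unfolding qmatrix_def jumpP_def by (auto intro!: divide_nonneg_pos)

lemma jumpP_has_sum:
  fixes \<Gamma> :: "'x \<Rightarrow> 'x \<Rightarrow> real"
  assumes q: "qmatrix \<Gamma>" and s: "(\<lambda>z. \<Gamma> x z * h z) summable_on (UNIV - {x})"
  shows "(\<lambda>z. jumpP \<Gamma> x z * h z) summable_on UNIV"
    and "infsum (\<lambda>z. jumpP \<Gamma> x z * h z) UNIV = infsum (\<lambda>z. \<Gamma> x z * h z) (UNIV - {x}) / rate \<Gamma> x"
proof -
  have s2: "(\<lambda>z. \<Gamma> x z * h z * (1 / rate \<Gamma> x)) summable_on (UNIV - {x})"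
    using s by (rule summable_on_cmult_left)
  have e: "\<And>z. jumpP \<Gamma> x z * h z = (if z = x then 0 else \<Gamma> x z * h z * (1 / rate \<Gamma> x))"
    unfolding jumpP_def by auto
  show "(\<lambda>z. jumpP \<Gamma> x z * h z) summable_on UNIV"
    using s2 by (subst summable_on_cong_neutral[where T="UNIV - {x}" and g="\<lambda>z. \<Gamma> x z * h z * (1 / rate \<Gamma> x)"]) (auto simp: e)
  have "infsum (\<lambda>z. jumpP \<Gamma> x z * h z) UNIV = infsum (\<lambda>z. \<Gamma> x z * h z * (1 / rate \<Gamma> x)) (UNIV - {x})"
    by (rule infsum_cong_neutral) (auto simp: e)
  also have "\<dots> = infsum (\<lambda>z. \<Gamma> x z * h z) (UNIV - {x}) * (1 / rate \<Gamma> x)"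
    using s by (intro infsum_cmult_left) auto
  finally show "infsum (\<lambda>z. jumpP \<Gamma> x z * h z) UNIV = infsum (\<lambda>z. \<Gamma> x z * h z) (UNIV - {x}) / rate \<Gamma> x"
    by simp
qed

lemma jumpP_sum:
  fixes \<Gamma> :: "'x \<Rightarrow> 'x \<Rightarrow> real"
  assumes q: "qmatrix \<Gamma>"
  shows "(\<integral>\<^sup>+z. ennreal (jumpP \<Gamma> x z) \<partial>count_space UNIV) = 1"
proof -
  have s: "(\<lambda>z. \<Gamma> x z * 1) summable_on (UNIV - {x})" using q unfolding qmatrix_def by simp
  note J = jumpP_has_sum[OF q s]
  have "(\<integral>\<^sup>+z. ennreal (jumpP \<Gamma> x z) \<partial>count_space UNIV) = ennreal (infsum (\<lambda>z. jumpP \<Gamma> x z * 1) UNIV)"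
    using nn_conv[OF J(1)] jumpP_nonneg[OF q] by simp
  also have "\<dots> = 1" using J(2) q unfolding qmatrix_def rate_def by (simp, metis less_irrefl)
  finally show ?thesis .
qed

lemma drift:
  fixes \<Gamma> :: "'x \<Rightarrow> 'x \<Rightarrow> real" and f h :: "'x \<Rightarrow> real" and g :: "real \<Rightarrow> real"
  assumes q: "qmatrix \<Gamma>" and dom: "in_Dom \<Gamma> f" and fpos: "\<forall>x. f x > 0"
    and h0: "\<forall>x. 0 \<le> h x" and hC: "\<forall>x. h x \<le> C"
    and gpos: "g (f x) > 0"
    and key: "\<forall>z. h z - h x \<le> (f z - f x) / g (f x)"
    and gen: "gen_apply \<Gamma> f x \<le> - g (f x)"
  shows "(\<integral>\<^sup>+z. ennreal (jumpP \<Gamma> x z) * ennreal (h z) \<partial>count_space UNIV) + ennreal (1 / rate \<Gamma> x) \<le> ennreal (h x)"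
proof -
  define R where "R = UNIV - {x}"
  define \<gamma> where "\<gamma> = rate \<Gamma> x"
  define G where "G = g (f x)"
  have Gpos: "G > 0" using gpos G_def by simp
  have nonneg: "\<And>z. z \<in> R \<Longrightarrow> \<Gamma> x z \<ge> 0" using q unfolding qmatrix_def R_def by auto
  have sG: "\<Gamma> x summable_on R" using q unfolding qmatrix_def R_def by auto
  have gam: "\<gamma> = infsum (\<Gamma> x) R" unfolding \<gamma>_def rate_def R_def ..
  have gampos: "\<gamma> > 0" using q unfolding qmatrix_def \<gamma>_def by auto
  have diag: "\<Gamma> x x = - \<gamma>" using q unfolding qmatrix_def \<gamma>_def by auto
  have sf: "(\<lambda>z. \<Gamma> x z * f z) summable_on R"
    using dom fpos unfolding in_Dom_def R_def by (simp add: abs_of_pos less_imp_le)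
  have sC: "(\<lambda>z. \<Gamma> x z * C) summable_on R" using sG by (rule summable_on_cmult_left)
  have sh: "(\<lambda>z. \<Gamma> x z * h z) summable_on R"
    by (rule summable_on_comparison_test[OF sC]) (auto intro: mult_left_mono simp: nonneg hC h0)
  have "gen_apply \<Gamma> f x = infsum (\<lambda>z. \<Gamma> x z * f z) (insert x R)"
    unfolding gen_apply_def R_def by (simp add: insert_absorb)
  also have "\<dots> = \<Gamma> x x * f x + infsum (\<lambda>z. \<Gamma> x z * f z) R"
    using sf by (rule infsum_insert) (simp add: R_def)
  finally have genE: "infsum (\<lambda>z. \<Gamma> x z * f z) R - \<gamma> * f x \<le> - G"
    using gen diag G_def by simp
  define c1 where "c1 = h x - f x / G"
  define c2 where "c2 = 1 / G"
  have "infsum (\<lambda>z. \<Gamma> x z * h z) R \<le> infsum (\<lambda>z. \<Gamma> x z * c1 + (\<Gamma> x z * f z) * c2) R"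
  proof (rule infsum_mono[OF sh])
    show "(\<lambda>z. \<Gamma> x z * c1 + (\<Gamma> x z * f z) * c2) summable_on R"
      by (intro summable_on_add summable_on_cmult_left sG sf)
    fix z assume z: "z \<in> R"
    have "\<Gamma> x z * (h z - h x) \<le> \<Gamma> x z * ((f z - f x) / G)"
      using key nonneg[OF z] G_def by (intro mult_left_mono) auto
    thus "\<Gamma> x z * h z \<le> \<Gamma> x z * c1 + (\<Gamma> x z * f z) * c2"
      unfolding c1_def c2_def by (simp add: algebra_simps diff_divide_distrib)
  qed
  also have "\<dots> = infsum (\<lambda>z. \<Gamma> x z * c1) R + infsum (\<lambda>z. (\<Gamma> x z * f z) * c2) R"
    by (intro infsum_add summable_on_cmult_left sG sf)
  also have "\<dots> = \<gamma> * c1 + infsum (\<lambda>z. \<Gamma> x z * f z) R * c2"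
    using sG sf gam by (simp add: infsum_cmult_left)
  also have "\<dots> = \<gamma> * h x + (infsum (\<lambda>z. \<Gamma> x z * f z) R - \<gamma> * f x) / G"
    unfolding c1_def c2_def using Gpos by (simp add: field_simps)
  also have "\<dots> \<le> \<gamma> * h x + (- G) / G"
    using genE Gpos by (intro add_left_mono divide_right_mono) auto
  finally have Sh: "infsum (\<lambda>z. \<Gamma> x z * h z) R \<le> \<gamma> * h x - 1" using Gpos by simp
  have Shnn: "infsum (\<lambda>z. \<Gamma> x z * h z) R \<ge> 0"
    by (rule infsum_nonneg) (simp add: nonneg h0)
  note J = jumpP_has_sum[OF q sh[unfolded R_def]]
  have "(\<integral>\<^sup>+z. ennreal (jumpP \<Gamma> x z) * ennreal (h z) \<partial>count_space UNIV)
      = (\<integral>\<^sup>+z. ennreal (jumpP \<Gamma> x z * h z) \<partial>count_space UNIV)"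
    using jumpP_nonneg[OF q] h0 by (simp add: ennreal_mult)
  also have "\<dots> = ennreal (infsum (\<lambda>z. \<Gamma> x z * h z) R / \<gamma>)"
    using nn_conv[OF J(1)] J(2) jumpP_nonneg[OF q] h0 R_def \<gamma>_def by simp
  finally have "(\<integral>\<^sup>+z. ennreal (jumpP \<Gamma> x z) * ennreal (h z) \<partial>count_space UNIV) + ennreal (1 / rate \<Gamma> x)
     = ennreal (infsum (\<lambda>z. \<Gamma> x z * h z) R / \<gamma> + 1 / \<gamma>)"
    using Shnn gampos \<gamma>_def by (simp add: ennreal_plus)
  also have "\<dots> \<le> ennreal (h x)"
  proof (rule ennreal_leI)
    have "infsum (\<lambda>z. \<Gamma> x z * h z) R / \<gamma> + 1 / \<gamma> = (infsum (\<lambda>z. \<Gamma> x z * h z) R + 1) / \<gamma>"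
      by (simp add: add_divide_distrib)
    also have "\<dots> \<le> (\<gamma> * h x) / \<gamma>" using Sh gampos by (intro divide_right_mono) auto
    also have "\<dots> = h x" using gampos by simp
    finally show "infsum (\<lambda>z. \<Gamma> x z * h z) R / \<gamma> + 1 / \<gamma> \<le> h x" .
  qed
  finally show ?thesis .
qed




lemma Fprops:
  fixes g :: "real \<Rightarrow> real" and b :: real
  assumes mono: "mono_on {0<..} g" and gpos: "\<forall>y>0. g y > 0"
    and fin: "(\<integral>\<^sup>+ y \<in> {0<..b}. ennreal (1 / g y) \<partial>lborel) < \<infinity>"
  defines "F \<equiv> \<lambda>u. enn2real (\<integral>\<^sup>+ y \<in> {0<..u}. ennreal (1 / g y) \<partial>lborel)"
  shows "\<And>u. 0 \<le> F u" "\<And>u. u \<le> b \<Longrightarrow> F u \<le> F b"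
    "\<And>a c. 0 < a \<Longrightarrow> a \<le> b \<Longrightarrow> 0 < c \<Longrightarrow> c \<le> b \<Longrightarrow> F c - F a \<le> (c - a) / g a"
proof -
  define I where "I = (\<lambda>A. \<integral>\<^sup>+ y. ennreal (1 / g y) * indicator A y \<partial>lborel)"
  have FI: "F u = enn2real (I {0<..u})" for u unfolding F_def I_def by simp
  define g3 where "g3 = (\<lambda>y. if 0 < y then g y else 0)"
  have "mono g3"
  proof (rule monoI)
    fix x y :: real assume "x \<le> y"
    thus "g3 x \<le> g3 y" using gpos mono unfolding g3_def mono_on_def
      by (auto simp: less_imp_le)
  qed
  hence [measurable]: "g3 \<in> borel_measurable borel" by (rule borel_measurable_mono)
  have meas: "(\<lambda>y. ennreal (1 / g y) * indicator A y) \<in> borel_measurable lborel"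
    if "A \<in> sets borel" "A \<subseteq> {0<..}" for A
  proof -
    have "(\<lambda>y. ennreal (1 / g y) * indicator A y) = (\<lambda>y. ennreal (1 / g3 y) * indicator A y)"
      using that by (auto simp: g3_def fun_eq_iff split: split_indicator)
    also have "\<dots> \<in> borel_measurable lborel" using that by measurable
    finally show ?thesis .
  qed
  have split: "I {0<..c} = I {0<..a} + I {a<..c}" if "0 \<le> a" "a \<le> c" for a c
  proof -
    have "I {0<..c} = (\<integral>\<^sup>+ y. ennreal (1 / g y) * indicator {0<..a} y + ennreal (1 / g y) * indicator {a<..c} y \<partial>lborel)"
      unfolding I_def using that by (intro nn_integral_cong) (auto split: split_indicator)
    also have "\<dots> = I {0<..a} + I {a<..c}"
      unfolding I_def using that by (intro nn_integral_add meas) auto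
    finally show ?thesis .
  qed
  have upper: "I {a<..c} \<le> ennreal (1 / g a) * ennreal (c - a)" if "0 < a" "a \<le> c" for a c
  proof -
    have "I {a<..c} \<le> (\<integral>\<^sup>+ y. ennreal (1 / g a) * indicator {a<..c} y \<partial>lborel)"
      unfolding I_def
    proof (intro nn_integral_mono)
      fix y show "ennreal (1 / g y) * indicator {a<..c} y \<le> ennreal (1 / g a) * indicator {a<..c} y"
      proof (cases "y \<in> {a<..c}")
        case True
        hence "g a \<le> g y" using mono that unfolding mono_on_def by auto
        hence "1 / g y \<le> 1 / g a" using gpos that by (intro divide_left_mono) auto
        thus ?thesis using True by (auto intro: ennreal_leI)
      qed auto
    qed
    also have "\<dots> = ennreal (1 / g a) * ennreal (c - a)"
      using that by (simp add: nn_integral_cmult_indicator)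
    finally show ?thesis .
  qed
  have lower: "ennreal (1 / g c) * ennreal (c - a) \<le> I {a<..c}" if "0 < a" "a \<le> c" for a c
  proof -
    have "ennreal (1 / g c) * ennreal (c - a) = (\<integral>\<^sup>+ y. ennreal (1 / g c) * indicator {a<..c} y \<partial>lborel)"
      using that by (simp add: nn_integral_cmult_indicator)
    also have "\<dots> \<le> I {a<..c}"
      unfolding I_def
    proof (intro nn_integral_mono)
      fix y show "ennreal (1 / g c) * indicator {a<..c} y \<le> ennreal (1 / g y) * indicator {a<..c} y"
      proof (cases "y \<in> {a<..c}")
        case True
        hence "g y \<le> g c" using mono that unfolding mono_on_def by auto
        hence "1 / g c \<le> 1 / g y" using gpos that True by (intro divide_left_mono) auto
        thus ?thesis using True by (auto intro: ennreal_leI)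
      qed auto
    qed
    finally show ?thesis .
  qed
  have finb: "I {0<..b} < \<infinity>" using fin unfolding I_def by simp
  have monoI: "I {0<..u} \<le> I {0<..v}" if "u \<le> v" for u v
    unfolding I_def using that by (intro nn_integral_mono) (auto split: split_indicator)
  have finu: "I {0<..u} < \<infinity>" if "u \<le> b" for u using monoI[OF that] finb by auto
  show "\<And>u. 0 \<le> F u" unfolding FI by simp
  show "\<And>u. u \<le> b \<Longrightarrow> F u \<le> F b" unfolding FI using monoI finb
    by (simp add: enn2real_mono)
  show "F c - F a \<le> (c - a) / g a" if h: "0 < a" "a \<le> b" "0 < c" "c \<le> b" for a c
  proof (cases "a \<le> c")
    case True
    have fa: "I {0<..a} < \<infinity>" "I {a<..c} < \<infinity>" using finu[of a] finu[of c] split[of a c] h True by auto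
    have "F c = F a + enn2real (I {a<..c})" unfolding FI using split[of a c] h True fa
      by (simp add: enn2real_plus)
    moreover have "enn2real (I {a<..c}) \<le> (c - a) / g a"
    proof -
      have "enn2real (I {a<..c}) \<le> enn2real (ennreal (1 / g a) * ennreal (c - a))"
        using upper[of a c] h True by (intro enn2real_mono) (auto simp: ennreal_mult_less_top)
      also have "\<dots> = (c - a) / g a" using h True gpos
        by (simp add: ennreal_mult[symmetric] less_imp_le)
      finally show ?thesis .
    qed
    ultimately show ?thesis by simp
  next
    case False
    have fa: "I {0<..c} < \<infinity>" "I {c<..a} < \<infinity>" using finu[of a] finu[of c] split[of c a] h False by auto
    have "F a = F c + enn2real (I {c<..a})" unfolding FI using split[of c a] h False fa
      by (simp add: enn2real_plus)
    moreover have "(a - c) / g a \<le> enn2real (I {c<..a})"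
    proof -
      have "(a - c) / g a = enn2real (ennreal (1 / g a) * ennreal (a - c))" using h False gpos
        by (simp add: ennreal_mult[symmetric] less_imp_le)
      also have "\<dots> \<le> enn2real (I {c<..a})"
        using lower[of c a] h False fa by (intro enn2real_mono) auto
      finally show ?thesis .
    qed
    ultimately show ?thesis by (simp add: diff_divide_distrib)
  qed
qed




locale ctmc =
  fixes \<Gamma> :: "'x::countable \<Rightarrow> 'x \<Rightarrow> real" and x0 :: 'x and M :: "'a measure"
    and X :: "nat \<Rightarrow> 'a \<Rightarrow> 'x" and sig :: "nat \<Rightarrow> 'a \<Rightarrow> real"
  assumes q: "qmatrix \<Gamma>" and model: "ctmc_model \<Gamma> x0 M X sig"
begin

sublocale prob_space M using model unfolding ctmc_model_def by auto

lemma X_meas[measurable]: "X n \<in> measurable M (count_space UNIV)"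
  using model unfolding ctmc_model_def by auto
lemma sig_meas[measurable]: "sig n \<in> borel_measurable M"
  using model unfolding ctmc_model_def by auto

lemma spec:
  assumes "length xs = Suc n" "length ts = n" "\<forall>t\<in>set ts. t \<ge> 0"
  shows "emeasure M {\<omega> \<in> space M. (\<forall>i\<le>n. X i \<omega> = xs ! i) \<and> (\<forall>i<n. sig (Suc i) \<omega> > ts ! i)}
        = ennreal ((if xs ! 0 = x0 then 1 else 0) *
          (\<Prod>i<n. jumpP \<Gamma> (xs ! i) (xs ! Suc i) * exp (- rate \<Gamma> (xs ! i) * ts ! i)))"
proof -
  have "measure M {\<omega> \<in> space M. (\<forall>i\<le>n. X i \<omega> = xs ! i) \<and> (\<forall>i<n. sig (Suc i) \<omega> > ts ! i)}
        = (if xs ! 0 = x0 then 1 else 0) *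
          (\<Prod>i<n. jumpP \<Gamma> (xs ! i) (xs ! Suc i) * exp (- rate \<Gamma> (xs ! i) * ts ! i))"
    using model assms unfolding ctmc_model_def by blast
  thus ?thesis by (metis emeasure_eq_measure)
qed

definition pp :: "'x list \<Rightarrow> real" where
  "pp xs = (if xs ! 0 = x0 then 1 else 0) * (\<Prod>i<length xs - 1. jumpP \<Gamma> (xs!i) (xs!Suc i))"

definition Lset :: "nat \<Rightarrow> 'x list set" where "Lset n = {xs. length xs = Suc n}"

definition PP :: "nat \<Rightarrow> ('x \<Rightarrow> ennreal) \<Rightarrow> ennreal" where
  "PP n \<phi> = (\<integral>\<^sup>+ xs. ennreal (pp xs) * \<phi> (last xs) \<partial>count_space (Lset n))"

definition Aev :: "'x list \<Rightarrow> 'a set" where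
  "Aev xs = {\<omega>\<in>space M. (\<forall>i<length xs. X i \<omega> = xs!i) \<and> (\<forall>i<length xs - 1. 0 < sig (Suc i) \<omega>)}"

lemma Aev_sets[measurable]: "Aev xs \<in> sets M"
  unfolding Aev_def by measurable

lemma pp_nonneg: "pp xs \<ge> 0"
  unfolding pp_def using jumpP_nonneg[OF q] by (auto intro!: prod_nonneg)

lemma Lset_countable: "countable (Lset n)" by (rule countableI_type)

lemma pp_snoc:
  assumes "length xs = Suc n"
  shows "pp (xs @ [z]) = pp xs * jumpP \<Gamma> (last xs) z"
proof -
  have l: "last xs = xs ! n" using assms last_conv_nth[of xs] by force
  have "(\<Prod>i<Suc n. jumpP \<Gamma> ((xs@[z])!i) ((xs@[z])!Suc i))
      = (\<Prod>i<n. jumpP \<Gamma> (xs!i) (xs!Suc i)) * jumpP \<Gamma> (last xs) z"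
    using assms l by (simp add: nth_append)
  moreover have "(xs @ [z]) ! 0 = xs ! 0" using assms by (simp add: nth_append)
  ultimately show ?thesis using assms unfolding pp_def by simp
qed

lemma PP_add: "PP n (\<lambda>y. a y + b y) = PP n a + PP n b"
  unfolding PP_def by (simp add: distrib_left nn_integral_add)

lemma PP_mono: "(\<And>y. a y \<le> b y) \<Longrightarrow> PP n a \<le> PP n b"
  unfolding PP_def by (intro nn_integral_mono mult_left_mono) auto

lemma PP_0: "PP 0 \<phi> = \<phi> x0"
proof -
  have bij: "bij_betw (\<lambda>a. [a]) UNIV (Lset 0)"
    unfolding Lset_def by (rule bij_betwI') (auto simp: length_Suc_conv)
  have "PP 0 \<phi> = (\<integral>\<^sup>+ a. ennreal (pp [a]) * \<phi> (last [a]) \<partial>count_space UNIV)"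
    unfolding PP_def by (rule nn_integral_bij_count_space[OF bij, symmetric])
  also have "\<dots> = (\<integral>\<^sup>+ a. \<phi> x0 * indicator {x0} a \<partial>count_space UNIV)"
    by (intro nn_integral_cong) (auto simp: pp_def split: split_indicator)
  also have "\<dots> = \<phi> x0" by (simp add: nn_integral_cmult_indicator)
  finally show ?thesis .
qed

lemma PP_Suc: "PP (Suc n) \<phi> = PP n (\<lambda>y. \<integral>\<^sup>+z. ennreal (jumpP \<Gamma> y z) * \<phi> z \<partial>count_space UNIV)"
proof -
  have bij: "bij_betw (\<lambda>(xs, z). xs @ [z]) (Lset n \<times> UNIV) (Lset (Suc n))"
  proof (rule bij_betwI')
    show "\<And>x y. x \<in> Lset n \<times> UNIV \<Longrightarrow> y \<in> Lset n \<times> UNIV \<Longrightarrow>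
       ((case x of (xs, z) \<Rightarrow> xs @ [z]) = (case y of (xs, z) \<Rightarrow> xs @ [z])) = (x = y)"
      by auto
    show "\<And>x. x \<in> Lset n \<times> UNIV \<Longrightarrow> (case x of (xs, z) \<Rightarrow> xs @ [z]) \<in> Lset (Suc n)"
      by (auto simp: Lset_def)
    show "\<exists>x\<in>Lset n \<times> UNIV. y = (case x of (xs, z) \<Rightarrow> xs @ [z])" if "y \<in> Lset (Suc n)" for y
    proof (rule bexI[of _ "(butlast y, last y)"])
      show "y = (case (butlast y, last y) of (xs, z) \<Rightarrow> xs @ [z])" using that
        by (auto simp: Lset_def) (metis append_butlast_last_id list.size(3) nat.simps(3))
    qed (use that in \<open>auto simp: Lset_def\<close>)
  qed
  interpret P2: pair_sigma_finite "count_space (Lset n)" "count_space (UNIV :: 'x set)"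
    by (intro pair_sigma_finite.intro sigma_finite_measure_count_space_countable Lset_countable) auto
  have "PP (Suc n) \<phi> = (\<integral>\<^sup>+ p. (case p of (xs, z) \<Rightarrow> ennreal (pp xs) * (ennreal (jumpP \<Gamma> (last xs) z) * \<phi> z)) \<partial>count_space (Lset n \<times> UNIV))"
    unfolding PP_def
    by (subst nn_integral_bij_count_space[OF bij, symmetric])
       (auto intro!: nn_integral_cong simp: Lset_def pp_snoc ennreal_mult pp_nonneg jumpP_nonneg[OF q] mult.assoc)
  also have "\<dots> = (\<integral>\<^sup>+ p. (case p of (xs, z) \<Rightarrow> ennreal (pp xs) * (ennreal (jumpP \<Gamma> (last xs) z) * \<phi> z)) \<partial>(count_space (Lset n) \<Otimes>\<^sub>M count_space UNIV))"
    by (simp add: pair_measure_countable Lset_countable)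
  also have "\<dots> = (\<integral>\<^sup>+ xs. \<integral>\<^sup>+ z. ennreal (pp xs) * (ennreal (jumpP \<Gamma> (last xs) z) * \<phi> z) \<partial>count_space UNIV \<partial>count_space (Lset n))"
  proof -
    have m: "(\<lambda>(xs,z). ennreal (pp xs) * (ennreal (jumpP \<Gamma> (last xs) z) * \<phi> z)) \<in> borel_measurable (count_space (Lset n) \<Otimes>\<^sub>M count_space UNIV)"
      by (simp add: pair_measure_countable Lset_countable)
    show ?thesis using P2.M2.nn_integral_fst[OF m] by simp
  qed
  also have "\<dots> = PP n (\<lambda>y. \<integral>\<^sup>+z. ennreal (jumpP \<Gamma> y z) * \<phi> z \<partial>count_space UNIV)"
    unfolding PP_def by (simp add: nn_integral_cmult)
  finally show ?thesis .
qed

lemma PP_one: "PP n (\<lambda>_. 1) = 1"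
  by (induction n) (simp_all add: PP_0 PP_Suc jumpP_sum[OF q])


lemma union_eq:
  "{\<omega>\<in>space M. (\<forall>i<n. 0 < sig (Suc i) \<omega>) \<and> P \<omega>} = (\<Union>xs\<in>Lset n. {\<omega>\<in>Aev xs. P \<omega>})"
proof (intro equalityI subsetI)
  fix \<omega> assume w: "\<omega> \<in> {\<omega>\<in>space M. (\<forall>i<n. 0 < sig (Suc i) \<omega>) \<and> P \<omega>}"
  define xs where "xs = map (\<lambda>i. X i \<omega>) [0..<Suc n]"
  have "xs \<in> Lset n" unfolding xs_def Lset_def by simp
  moreover have "\<omega> \<in> Aev xs" using w unfolding Aev_def xs_def
    by (auto simp del: upt_Suc)
  ultimately show "\<omega> \<in> (\<Union>xs\<in>Lset n. {\<omega>\<in>Aev xs. P \<omega>})" using w by auto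
next
  fix \<omega> assume "\<omega> \<in> (\<Union>xs\<in>Lset n. {\<omega>\<in>Aev xs. P \<omega>})"
  then obtain xs where "length xs = Suc n" "\<omega> \<in> Aev xs" "P \<omega>" unfolding Lset_def by auto
  thus "\<omega> \<in> {\<omega>\<in>space M. (\<forall>i<n. 0 < sig (Suc i) \<omega>) \<and> P \<omega>}" unfolding Aev_def by auto
qed

lemma disj: "disjoint_family_on (\<lambda>xs. {\<omega>\<in>Aev xs. P \<omega>}) (Lset n)"
unfolding disjoint_family_on_def
proof (intro ballI impI)
  fix xs ys assume xs: "xs \<in> Lset n" and ys: "ys \<in> Lset n" and ne: "xs \<noteq> ys"
  show "{\<omega>\<in>Aev xs. P \<omega>} \<inter> {\<omega>\<in>Aev ys. P \<omega>} = {}"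
  proof (rule ccontr)
    assume "{\<omega>\<in>Aev xs. P \<omega>} \<inter> {\<omega>\<in>Aev ys. P \<omega>} \<noteq> {}"
    then obtain \<omega> where "\<omega> \<in> Aev xs" "\<omega> \<in> Aev ys" by auto
    hence "\<And>i. i < Suc n \<Longrightarrow> xs ! i = ys ! i" using xs ys unfolding Aev_def Lset_def by auto
    hence "xs = ys" using xs ys unfolding Lset_def by (auto intro: nth_equalityI)
    thus False using ne by simp
  qed
qed

lemma emeasure_union:
  assumes [measurable]: "Measurable.pred M P"
  shows "emeasure M {\<omega>\<in>space M. (\<forall>i<n. 0 < sig (Suc i) \<omega>) \<and> P \<omega>}
       = (\<integral>\<^sup>+xs. emeasure M {\<omega>\<in>Aev xs. P \<omega>} \<partial>count_space (Lset n))"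
proof -
  have s: "{\<omega>\<in>Aev xs. P \<omega>} \<in> sets M" for xs
  proof -
    have "{\<omega>\<in>Aev xs. P \<omega>} = Aev xs \<inter> {\<omega>\<in>space M. P \<omega>}" unfolding Aev_def by auto
    also have "\<dots> \<in> sets M" by measurable
    finally show ?thesis .
  qed
  show ?thesis unfolding union_eq
    by (rule emeasure_UN_countable[OF s Lset_countable disj])
qed

lemma K1:
  assumes "length xs = Suc n"
  shows "emeasure M (Aev xs) = ennreal (pp xs)"
proof -
  have "Aev xs = {\<omega> \<in> space M. (\<forall>i\<le>n. X i \<omega> = xs ! i) \<and> (\<forall>i<n. sig (Suc i) \<omega> > replicate n 0 ! i)}"
    unfolding Aev_def using assms by (auto simp: less_Suc_eq_le)
  also have "emeasure M \<dots> = ennreal (pp xs)"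
    using spec[of xs n "replicate n 0"] assms unfolding pp_def by simp
  finally show ?thesis .
qed

lemma K2:
  assumes len: "length xs = Suc n" and t: "0 \<le> t"
  shows "emeasure M {\<omega>\<in>Aev xs. t < sig (Suc n) \<omega>} = ennreal (pp xs * exp (- rate \<Gamma> (last xs) * t))"
proof -
  define ts where "ts = replicate n 0 @ [t]"
  have ts0: "i < n \<Longrightarrow> ts ! i = 0" for i unfolding ts_def by (simp add: nth_append)
  have tsn: "ts ! n = t" unfolding ts_def by (simp add: nth_append)
  have l: "last xs = xs ! n" using len last_conv_nth[of xs] by force
  define B where "B z = {\<omega>\<in>space M. (\<forall>i\<le>Suc n. X i \<omega> = (xs@[z])!i) \<and> (\<forall>i<Suc n. ts!i < sig (Suc i) \<omega>)}" for z
  have eq: "{\<omega>\<in>Aev xs. t < sig (Suc n) \<omega>} = (\<Union>z\<in>UNIV. B z)"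
  proof (intro equalityI subsetI)
    fix \<omega> assume w: "\<omega> \<in> {\<omega>\<in>Aev xs. t < sig (Suc n) \<omega>}"
    have "\<omega> \<in> B (X (Suc n) \<omega>)" unfolding B_def
    proof (intro CollectI conjI allI impI)
      show "\<omega> \<in> space M" using w unfolding Aev_def by auto
      fix i assume "i \<le> Suc n"
      thus "X i \<omega> = (xs @ [X (Suc n) \<omega>]) ! i" using w len unfolding Aev_def
        by (cases "i = Suc n") (auto simp: nth_append)
    next
      fix i assume "i < Suc n"
      thus "ts ! i < sig (Suc i) \<omega>" using w len ts0 tsn unfolding Aev_def
        by (cases "i = n") auto
    qed
    thus "\<omega> \<in> (\<Union>z\<in>UNIV. B z)" by auto
  next
    fix \<omega> assume "\<omega> \<in> (\<Union>z\<in>UNIV. B z)"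
    then obtain z where w: "\<omega> \<in> B z" by auto
    have a: "\<forall>i<length xs. X i \<omega> = xs ! i"
    proof (intro allI impI)
      fix i assume "i < length xs"
      thus "X i \<omega> = xs ! i" using w len unfolding B_def by (auto simp: nth_append)
    qed
    have b: "\<forall>i<length xs - 1. 0 < sig (Suc i) \<omega>"
    proof (intro allI impI)
      fix i assume "i < length xs - 1"
      hence "i < n" "i < Suc n" using len by auto
      thus "0 < sig (Suc i) \<omega>" using w ts0[of i] unfolding B_def by (metis (no_types, lifting) mem_Collect_eq)
    qed
    have c: "t < sig (Suc n) \<omega>" using w tsn unfolding B_def by auto
    show "\<omega> \<in> {\<omega>\<in>Aev xs. t < sig (Suc n) \<omega>}" using a b c w unfolding Aev_def B_def by auto
  qed
  have Bs: "B z \<in> sets M" for z unfolding B_def by measurable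
  have dB: "disjoint_family_on B UNIV"
    unfolding disjoint_family_on_def B_def using len
    by auto (metis le_refl nth_append_length)
  have prod: "(\<Prod>i<Suc n. jumpP \<Gamma> ((xs@[z]) ! i) ((xs@[z]) ! Suc i) * exp (- rate \<Gamma> ((xs@[z]) ! i) * ts ! i))
      = (\<Prod>i<n. jumpP \<Gamma> (xs ! i) (xs ! Suc i)) * (jumpP \<Gamma> (last xs) z * exp (- rate \<Gamma> (last xs) * t))" for z
  proof -
    have "(\<Prod>i<n. jumpP \<Gamma> ((xs@[z]) ! i) ((xs@[z]) ! Suc i) * exp (- rate \<Gamma> ((xs@[z]) ! i) * ts ! i))
        = (\<Prod>i<n. jumpP \<Gamma> (xs ! i) (xs ! Suc i))"
      using len ts0 by (intro prod.cong) (auto simp: nth_append)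
    thus ?thesis using len l tsn by (simp add: nth_append)
  qed
  have eB: "emeasure M (B z) = ennreal (pp xs * exp (- rate \<Gamma> (last xs) * t)) * ennreal (jumpP \<Gamma> (last xs) z)" for z
  proof -
    have "emeasure M (B z) = ennreal ((if (xs@[z]) ! 0 = x0 then 1 else 0) *
          (\<Prod>i<Suc n. jumpP \<Gamma> ((xs@[z]) ! i) ((xs@[z]) ! Suc i) * exp (- rate \<Gamma> ((xs@[z]) ! i) * ts ! i)))"
      unfolding B_def using len t by (intro spec) (auto simp: ts_def)
    also have "\<dots> = ennreal (pp xs * exp (- rate \<Gamma> (last xs) * t) * jumpP \<Gamma> (last xs) z)"
      unfolding prod pp_def using len by (simp add: nth_append mult_ac)
    also have "\<dots> = ennreal (pp xs * exp (- rate \<Gamma> (last xs) * t)) * ennreal (jumpP \<Gamma> (last xs) z)"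
      by (simp add: ennreal_mult pp_nonneg jumpP_nonneg[OF q])
    finally show ?thesis .
  qed
  have "emeasure M {\<omega>\<in>Aev xs. t < sig (Suc n) \<omega>} = (\<integral>\<^sup>+z. emeasure M (B z) \<partial>count_space UNIV)"
    unfolding eq by (rule emeasure_UN_countable[OF Bs _ dB]) simp
  also have "\<dots> = ennreal (pp xs * exp (- rate \<Gamma> (last xs) * t))"
    unfolding eB by (simp add: nn_integral_cmult jumpP_sum[OF q])
  finally show ?thesis .
qed

lemma AE_pos: "AE \<omega> in M. \<forall>i<n. 0 < sig (Suc i) \<omega>"
proof -
  have "emeasure M {\<omega>\<in>space M. (\<forall>i<n. 0 < sig (Suc i) \<omega>) \<and> True} = (\<integral>\<^sup>+xs. emeasure M {\<omega>\<in>Aev xs. True} \<partial>count_space (Lset n))"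
    by (rule emeasure_union) simp
  also have "\<dots> = PP n (\<lambda>_. 1)" unfolding PP_def
    using Aev_sets[THEN sets.sets_into_space]
    by (intro nn_integral_cong) (auto simp: K1 Lset_def Int_absorb1 Collect_mem_eq)
  also have "\<dots> = 1" by (rule PP_one)
  finally show ?thesis by (subst AE_iff_emeasure_eq_1) auto
qed

end



lemma exp_int:
  assumes r: "0 < (r::real)"
  shows "(\<integral>\<^sup>+t. ennreal (indicator {0..} t * exp (- (r * t))) \<partial>lborel) = ennreal (1 / r)"
proof -
  interpret E: prob_space "density lborel (exponential_density r)"
    by (rule prob_space_exponential_density[OF r])
  have "1 = emeasure (density lborel (exponential_density r)) UNIV"
    using E.emeasure_space_1 by simp
  also have "\<dots> = (\<integral>\<^sup>+t. ennreal (exponential_density r t) \<partial>lborel)"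
    by (simp add: emeasure_density)
  also have "\<dots> = (\<integral>\<^sup>+t. ennreal r * ennreal (indicator {0..} t * exp (- (r * t))) \<partial>lborel)"
    using r by (intro nn_integral_cong) (auto simp: exponential_density_def ennreal_mult[symmetric] mult.commute split: split_indicator)
  also have "\<dots> = ennreal r * (\<integral>\<^sup>+t. ennreal (indicator {0..} t * exp (- (r * t))) \<partial>lborel)"
    by (rule nn_integral_cmult) simp
  finally have eq: "ennreal r * (\<integral>\<^sup>+t. ennreal (indicator {0..} t * exp (- (r * t))) \<partial>lborel) = 1" ..
  have "ennreal (1 / r) = ennreal (1 / r) * (ennreal r * (\<integral>\<^sup>+t. ennreal (indicator {0..} t * exp (- (r * t))) \<partial>lborel))"
    using eq by simp
  also have "\<dots> = (\<integral>\<^sup>+t. ennreal (indicator {0..} t * exp (- (r * t))) \<partial>lborel)"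
    using r by (simp add: mult.assoc[symmetric] ennreal_mult[symmetric])
  finally show ?thesis ..
qed

context ctmc begin

lemma rate_pos: "0 < rate \<Gamma> y" using q unfolding qmatrix_def by auto

lemma E_sig: "(\<integral>\<^sup>+\<omega>. ennreal (sig (Suc n) \<omega>) \<partial>M) = PP n (\<lambda>y. ennreal (1 / rate \<Gamma> y))"
proof -
  let ?s = "sig (Suc n)"
  interpret PS: pair_sigma_finite M lborel
    by (intro pair_sigma_finite.intro) unfold_locales
  have 1: "ennreal (?s \<omega>) = (\<integral>\<^sup>+t. indicator {0..<?s \<omega>} t \<partial>lborel)" for \<omega>
    by (cases "0 \<le> ?s \<omega>") (auto simp: ennreal_neg)
  have m: "(\<lambda>(\<omega>, t). indicator {0..<?s \<omega>} t :: ennreal) \<in> borel_measurable (M \<Otimes>\<^sub>M lborel)"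
  proof -
    have "(\<lambda>(\<omega>, t). indicator {0..<?s \<omega>} t :: ennreal) = (\<lambda>p. if 0 \<le> snd p \<and> snd p < ?s (fst p) then 1 else 0)"
      by (auto simp: fun_eq_iff split: split_indicator)
    also have "\<dots> \<in> borel_measurable (M \<Otimes>\<^sub>M lborel)" by measurable
    finally show ?thesis .
  qed
  have inner: "(\<integral>\<^sup>+\<omega>. indicator {0..<?s \<omega>} t \<partial>M)
      = (\<integral>\<^sup>+xs. ennreal (pp xs) * ennreal (indicator {0..} t * exp (- rate \<Gamma> (last xs) * t)) \<partial>count_space (Lset n))" for t
  proof (cases "0 \<le> t")
    case False
    thus ?thesis by (simp add: indicator_def)
  next
    case True
    have "(\<integral>\<^sup>+\<omega>. indicator {0..<?s \<omega>} t \<partial>M) = (\<integral>\<^sup>+\<omega>. indicator {\<omega>\<in>space M. t < ?s \<omega>} \<omega> \<partial>M)"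
      using True by (intro nn_integral_cong) (auto split: split_indicator)
    also have "\<dots> = emeasure M {\<omega>\<in>space M. t < ?s \<omega>}" by (rule nn_integral_indicator) measurable
    also have "\<dots> = emeasure M {\<omega>\<in>space M. (\<forall>i<n. 0 < sig (Suc i) \<omega>) \<and> t < ?s \<omega>}"
      by (rule emeasure_Collect_eq_AE) (use AE_pos[of n] in \<open>auto elim!: eventually_mono\<close>)
    also have "\<dots> = (\<integral>\<^sup>+xs. emeasure M {\<omega>\<in>Aev xs. t < ?s \<omega>} \<partial>count_space (Lset n))"
      by (rule emeasure_union) measurable
    also have "\<dots> = (\<integral>\<^sup>+xs. ennreal (pp xs) * ennreal (indicator {0..} t * exp (- rate \<Gamma> (last xs) * t)) \<partial>count_space (Lset n))"
      using True by (intro nn_integral_cong) (auto simp: K2 Lset_def ennreal_mult pp_nonneg)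
    finally show ?thesis .
  qed
  have "(\<integral>\<^sup>+\<omega>. ennreal (?s \<omega>) \<partial>M) = (\<integral>\<^sup>+\<omega>. \<integral>\<^sup>+t. indicator {0..<?s \<omega>} t \<partial>lborel \<partial>M)"
    by (simp only: 1)
  also have "\<dots> = (\<integral>\<^sup>+t. \<integral>\<^sup>+\<omega>. indicator {0..<?s \<omega>} t \<partial>M \<partial>lborel)"
    using PS.Fubini'[OF m] by simp
  also have "\<dots> = (\<integral>\<^sup>+t. \<integral>\<^sup>+xs. ennreal (pp xs) * ennreal (indicator {0..} t * exp (- rate \<Gamma> (last xs) * t)) \<partial>count_space (Lset n) \<partial>lborel)"
    by (simp only: inner)
  also have "\<dots> = (\<integral>\<^sup>+xs. \<integral>\<^sup>+t. ennreal (pp xs) * ennreal (indicator {0..} t * exp (- rate \<Gamma> (last xs) * t)) \<partial>lborel \<partial>count_space (Lset n))"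
    by (rule nn_integral_count_space_nn_integral[OF Lset_countable]) measurable
  also have "\<dots> = (\<integral>\<^sup>+xs. ennreal (pp xs) * ennreal (1 / rate \<Gamma> (last xs)) \<partial>count_space (Lset n))"
    by (intro nn_integral_cong) (simp add: nn_integral_cmult exp_int rate_pos)
  also have "\<dots> = PP n (\<lambda>y. ennreal (1 / rate \<Gamma> y))" unfolding PP_def ..
  finally show ?thesis .
qed

lemma bound:
  assumes h0: "\<forall>y. 0 \<le> h y"
    and dr: "\<forall>y. (\<integral>\<^sup>+z. ennreal (jumpP \<Gamma> y z) * ennreal (h z) \<partial>count_space UNIV) + ennreal (1 / rate \<Gamma> y) \<le> ennreal (h y)"
  shows "(\<integral>\<^sup>+\<omega>. explosion_time sig \<omega> \<partial>M) \<le> ennreal (h x0)"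
proof -
  define \<phi> where "\<phi> = (\<lambda>y. ennreal (1 / rate \<Gamma> y))"
  have tel: "(\<Sum>k<N. PP k \<phi>) + PP N (\<lambda>y. ennreal (h y)) \<le> ennreal (h x0)" for N
  proof (induction N)
    case 0 thus ?case by (simp add: PP_0)
  next
    case (Suc N)
    have "PP N \<phi> + PP (Suc N) (\<lambda>y. ennreal (h y))
        = PP N (\<lambda>y. (\<integral>\<^sup>+z. ennreal (jumpP \<Gamma> y z) * ennreal (h z) \<partial>count_space UNIV) + \<phi> y)"
      by (simp add: PP_Suc PP_add add.commute)
    also have "\<dots> \<le> PP N (\<lambda>y. ennreal (h y))"
      using dr unfolding \<phi>_def by (intro PP_mono) auto
    finally have "PP N \<phi> + PP (Suc N) (\<lambda>y. ennreal (h y)) \<le> PP N (\<lambda>y. ennreal (h y))" .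
    hence "(\<Sum>k<Suc N. PP k \<phi>) + PP (Suc N) (\<lambda>y. ennreal (h y)) \<le> (\<Sum>k<N. PP k \<phi>) + PP N (\<lambda>y. ennreal (h y))"
      by (simp add: add.assoc add_left_mono)
    thus ?case using Suc.IH by (rule order_trans)
  qed
  have part: "(\<Sum>k<N. PP k \<phi>) \<le> ennreal (h x0)" for N
    using tel[of N] by (meson add_increasing2 order_trans order_refl zero_le)
  have "(\<integral>\<^sup>+\<omega>. explosion_time sig \<omega> \<partial>M) = (\<Sum>n. \<integral>\<^sup>+\<omega>. ennreal (sig (Suc n) \<omega>) \<partial>M)"
    unfolding explosion_time_def by (rule nn_integral_suminf) measurable
  also have "\<dots> = (\<Sum>n. PP n \<phi>)" unfolding \<phi>_def E_sig ..
  also have "\<dots> \<le> ennreal (h x0)" by (rule suminf_le_const[OF summableI part])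
  finally show ?thesis .
qed

end

theorem proposition1p1:
  fixes \<Gamma> :: "'x::countable \<Rightarrow> 'x \<Rightarrow> real"
    and f :: "'x \<Rightarrow> real" and g :: "real \<Rightarrow> real"
  assumes "infinite (UNIV :: 'x set)"
    and "qmatrix \<Gamma>" and "jump_irreducible \<Gamma>"
    and "in_Dom \<Gamma> f" and "\<forall>x. f x > 0" and "bdd_above (range f)"
    and "mono_on {0<..} g" and "\<forall>y>0. g y > 0"
    and "(\<integral>\<^sup>+ y \<in> {0<..Sup (range f)}. ennreal (1 / g y) \<partial>lborel) < \<infinity>"
    and "\<forall>x. gen_apply \<Gamma> f x \<le> - g (f x)"
  shows "\<forall>x (M :: 'a measure) X sig. ctmc_model \<Gamma> x M X sig \<longrightarrow>
           (\<integral>\<^sup>+ \<omega>. explosion_time sig \<omega> \<partial>M) < \<infinity>"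
proof (intro allI impI)
  fix x0 :: 'x and M :: "'a measure" and X sig
  assume mod: "ctmc_model \<Gamma> x0 M X sig"
  interpret ctmc \<Gamma> x0 M X sig by (rule ctmc.intro[OF assms(2) mod])
  define b where "b = Sup (range f)"
  define F where "F = (\<lambda>u. enn2real (\<integral>\<^sup>+ y \<in> {0<..u}. ennreal (1 / g y) \<partial>lborel))"
  have fin: "(\<integral>\<^sup>+ y \<in> {0<..b}. ennreal (1 / g y) \<partial>lborel) < \<infinity>" using assms(9) b_def by simp
  note Fp = Fprops[OF assms(7) assms(8) fin]
  have fb: "f z \<le> b" for z unfolding b_def using assms(6) by (intro cSup_upper) auto
  define h where "h = (\<lambda>z. F (f z))"
  have h0: "\<forall>z. 0 \<le> h z" unfolding h_def F_def using Fp(1) by auto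
  have hC: "\<forall>z. h z \<le> F b" unfolding h_def F_def using Fp(2) fb by auto
  have dr: "\<forall>y. (\<integral>\<^sup>+z. ennreal (jumpP \<Gamma> y z) * ennreal (h z) \<partial>count_space UNIV) + ennreal (1 / rate \<Gamma> y) \<le> ennreal (h y)"
  proof
    fix y
    have key: "\<forall>z. h z - h y \<le> (f z - f y) / g (f y)"
      unfolding h_def F_def using Fp(3) fb assms(5) by auto
    show "(\<integral>\<^sup>+z. ennreal (jumpP \<Gamma> y z) * ennreal (h z) \<partial>count_space UNIV) + ennreal (1 / rate \<Gamma> y) \<le> ennreal (h y)"
      by (rule drift[where g=g, OF assms(2) assms(4) assms(5) h0 hC _ key assms(10)[rule_format, of y]]) (use assms(5) assms(8) in auto)
  qed
  have "(\<integral>\<^sup>+\<omega>. explosion_time sig \<omega> \<partial>M) \<le> ennreal (h x0)" by (rule bound[OF h0 dr])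
  also have "\<dots> < \<infinity>" by simp
  finally show "(\<integral>\<^sup>+\<omega>. explosion_time sig \<omega> \<partial>M) < \<infinity>" .
qed

end
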